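(* Let $(X,\tau)$ be a kd-space and let $A\subseteq X$ be locally dense, i.e. $A\subseteq \mathrm{Int}(\mathrm{Cl}(A))$. Then the subspace $(A,\tau|A)$ is a kd-space.
   Context: A space is a kd-space if every compact subset is $\delta$-closed. In a space $Y$, a set $U$ is regular open if $U=\mathrm{Int}(\mathrm{Cl}(U))$; a point $x$ is a $\delta$-cluster point of $B\subseteq Y$ if $B\cap U\neq\emptyset$ for every regular open $U\ni x$; $B$ is $\delta$-closed if it contains all its $\delta$-cluster points. *)

theory Defs
  imports "HOL-Analysis.Analysis"
begin

definition regular_open_in :: "'a topology \<Rightarrow> 'a set \<Rightarrow> bool" where
  "regular_open_in X U \<longleftrightarrow> U = X interior_of (X closure_of U)"

definition delta_cluster_point :: "'a topology \<Rightarrow> 'a \<Rightarrow> 'a set \<Rightarrow> bool" where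
  "delta_cluster_point X x B \<longleftrightarrow> x \<in> topspace X \<and>
     (\<forall>U. regular_open_in X U \<and> x \<in> U \<longrightarrow> B \<inter> U \<noteq> {})"

definition delta_closed_in :: "'a topology \<Rightarrow> 'a set \<Rightarrow> bool" where
  "delta_closed_in X B \<longleftrightarrow> B \<subseteq> topspace X \<and>
     (\<forall>x. delta_cluster_point X x B \<longrightarrow> x \<in> B)"

definition kd_space :: "'a topology \<Rightarrow> bool" where
  "kd_space X \<longleftrightarrow> (\<forall>K. compactin X K \<longrightarrow> delta_closed_in X K)"

end

theory Submission
  imports Defs
begin

lemma key:
  assumes U: "U = X interior_of (X closure_of U)"
    and A: "A \<subseteq> topspace X" "A \<subseteq> X interior_of (X closure_of A)"
  shows "regular_open_in (subtopology X A) (U \<inter> A)"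
proof -
  have oU: "openin X U" using U by (metis openin_interior_of)
  have cl: "subtopology X A closure_of (U \<inter> A) = X closure_of (U \<inter> A) \<inter> A"
    by (simp add: closure_of_subtopology inf_commute)
  show ?thesis unfolding regular_open_in_def cl
  proof
    show "U \<inter> A \<subseteq> subtopology X A interior_of (X closure_of (U \<inter> A) \<inter> A)"
    proof (rule interior_of_maximal)
      show "U \<inter> A \<subseteq> X closure_of (U \<inter> A) \<inter> A"
      proof -
        have "U \<inter> A \<subseteq> topspace X" using A(1) by blast
        then have "U \<inter> A \<subseteq> X closure_of (U \<inter> A)" by (rule closure_of_subset)
        then show ?thesis by blast
      qed
      show "openin (subtopology X A) (U \<inter> A)"
        using oU by (rule openin_subtopology_Int)
    qed
  next
    show "subtopology X A interior_of (X closure_of (U \<inter> A) \<inter> A) \<subseteq> U \<inter> A"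
    proof
      fix y assume "y \<in> subtopology X A interior_of (X closure_of (U \<inter> A) \<inter> A)"
      then obtain T where T: "openin (subtopology X A) T" "y \<in> T" "T \<subseteq> X closure_of (U \<inter> A) \<inter> A"
        unfolding interior_of_def by blast
      then obtain W where W: "openin X W" "T = W \<inter> A"
        by (auto simp: openin_subtopology)
      define W' where "W' = W \<inter> X interior_of (X closure_of A)"
      have oW': "openin X W'" unfolding W'_def using W by auto
      have yW': "y \<in> W'" unfolding W'_def using T W A by auto
      have sub: "W' \<subseteq> X closure_of (U \<inter> A)"
      proof
        fix z assume z: "z \<in> W'"
        have zt: "z \<in> topspace X" using openin_subset[OF oW'] z by (rule subsetD)
        show "z \<in> X closure_of (U \<inter> A)"
          unfolding in_closure_of
        proof (intro conjI allI impI zt)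
          fix N assume N: "z \<in> N \<and> openin X N"
          have "z \<in> X interior_of (X closure_of A)" using z unfolding W'_def by simp
          then have "z \<in> X closure_of A" using interior_of_subset[of X "X closure_of A"] by (meson subsetD)
          moreover have "z \<in> N \<inter> W'" "openin X (N \<inter> W')" using N z oW' by auto
          ultimately obtain a where a: "a \<in> A" "a \<in> N \<inter> W'"
            unfolding in_closure_of by blast
          then have "a \<in> T" using W unfolding W'_def by auto
          then have "a \<in> X closure_of (U \<inter> A)" using T by auto
          then obtain b where "b \<in> U \<inter> A" "b \<in> N \<inter> W'"
            unfolding in_closure_of using a \<open>openin X (N \<inter> W')\<close> by blast
          then show "\<exists>y. y \<in> U \<inter> A \<and> y \<in> N" by blast
        qed
      qed
      also have "\<dots> \<subseteq> X closure_of U" by (rule closure_of_mono) auto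
      finally have "W' \<subseteq> X interior_of (X closure_of U)"
        using oW' interior_of_maximal by blast
      then have "y \<in> U" using yW' U by auto
      then show "y \<in> U \<inter> A" using T by auto
    qed
  qed
qed

theorem mainTheorem5:
  fixes X :: "'a topology" and A :: "'a set"
  assumes "kd_space X"
    and "A \<subseteq> topspace X"
    and "A \<subseteq> X interior_of (X closure_of A)"
  shows "kd_space (subtopology X A)"
  unfolding kd_space_def
proof (intro allI impI)
  fix K assume cK: "compactin (subtopology X A) K"
  then have cX: "compactin X K" and KA: "K \<subseteq> A" by (auto simp: compactin_subtopology)
  then have dX: "delta_closed_in X K" using assms(1) unfolding kd_space_def by blast
  show "delta_closed_in (subtopology X A) K"
    unfolding delta_closed_in_def
  proof (intro conjI allI impI)
    show "K \<subseteq> topspace (subtopology X A)" using cK compactin_subset_topspace by blast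
  next
    fix x assume dx: "delta_cluster_point (subtopology X A) x K"
    then have xA: "x \<in> topspace X" "x \<in> A" unfolding delta_cluster_point_def by auto
    show "x \<in> K"
    proof (rule ccontr)
      assume "x \<notin> K"
      then have "\<not> delta_cluster_point X x K" using dX unfolding delta_closed_in_def by blast
      then obtain U where U: "regular_open_in X U" "x \<in> U" "K \<inter> U = {}"
        using xA unfolding delta_cluster_point_def by blast
      have "regular_open_in (subtopology X A) (U \<inter> A)"
        using key[OF U(1)[unfolded regular_open_in_def] assms(2,3)] .
      then have "K \<inter> (U \<inter> A) \<noteq> {}" using dx U xA unfolding delta_cluster_point_def by blast
      then show False using U by blast
    qed
  qed
qed

end
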